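(* Let $G$ be a group and $\mathcal S$ a stable admissible family of subgroups of $G$. Then the monoid $\widehat G_{\mathcal S}$ is a group.
   Context: An admissible family of subgroups of $G$ is a family $\mathcal S$ closed under conjugation such that the intersection of any finitely many members contains a member. It is stable if for all $K\le H$ in $\mathcal S$ there is $L\in\mathcal S$ with $L\le K$ and $L$ normal in $H$. $\widehat G_{\mathcal S}$ is the set of functions $f$ assigning to each $H\in\mathcal S$ a right coset $f(H)\in H\backslash G$ such that $f(K)\subseteq f(H)$ whenever $K\subseteq H$ are in $\mathcal S$ (i.e. $\widehat G_{\mathcal S}=\varprojlim H\backslash G$). For $f\in\widehat G_{\mathcal S}$ and $H\in\mathcal S$, write $H^f:=x^{-1}Hx$ where $f(H)=Hx$ (independent of the choice of $x$). The product is $(f\cdot f')(H)=f(H)\,f'(H^f)$ (product of subsets of $G$), which is associative with identity $e(H)=H$, making $\widehat G_{\mathcal S}$ a monoid. *)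

theory Defs
  imports "HOL-Algebra.Algebra"
begin

definition conjugate :: "('a, 'b) monoid_scheme \<Rightarrow> 'a set \<Rightarrow> 'a \<Rightarrow> 'a set" where
  "conjugate G H x = (inv\<^bsub>G\<^esub> x) <#\<^bsub>G\<^esub> H #>\<^bsub>G\<^esub> x"

definition admissible_family :: "('a, 'b) monoid_scheme \<Rightarrow> 'a set set \<Rightarrow> bool" where
  "admissible_family G S \<longleftrightarrow>
     (\<forall>H\<in>S. subgroup H G) \<and>
     (\<forall>H\<in>S. \<forall>x\<in>carrier G. conjugate G H x \<in> S) \<and>
     (\<forall>F. finite F \<and> F \<noteq> {} \<and> F \<subseteq> S \<longrightarrow> (\<exists>L\<in>S. L \<subseteq> \<Inter>F))"

definition stable_family :: "('a, 'b) monoid_scheme \<Rightarrow> 'a set set \<Rightarrow> bool" where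
  "stable_family G S \<longleftrightarrow>
     (\<forall>K\<in>S. \<forall>H\<in>S. K \<subseteq> H \<longrightarrow> (\<exists>L\<in>S. L \<subseteq> K \<and> L \<lhd> (G\<lparr>carrier := H\<rparr>)))"

text \<open>Elements of the inverse limit of the right coset spaces H\G, H in S.
  Functions are taken extensional: undefined outside S.\<close>
definition completion :: "('a, 'b) monoid_scheme \<Rightarrow> 'a set set \<Rightarrow> ('a set \<Rightarrow> 'a set) set" where
  "completion G S = {f. (\<forall>H\<in>S. f H \<in> rcosets\<^bsub>G\<^esub> H)
                      \<and> (\<forall>H\<in>S. \<forall>K\<in>S. K \<subseteq> H \<longrightarrow> f K \<subseteq> f H)
                      \<and> (\<forall>H. H \<notin> S \<longrightarrow> f H = undefined)}"

text \<open>H^f = x^{-1} H x where f(H) = Hx.\<close>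
definition conj_by :: "('a, 'b) monoid_scheme \<Rightarrow> ('a set \<Rightarrow> 'a set) \<Rightarrow> 'a set \<Rightarrow> 'a set" where
  "conj_by G f H = conjugate G H (SOME x. x \<in> carrier G \<and> f H = H #>\<^bsub>G\<^esub> x)"

definition completion_mult ::
  "('a, 'b) monoid_scheme \<Rightarrow> 'a set set \<Rightarrow> ('a set \<Rightarrow> 'a set) \<Rightarrow> ('a set \<Rightarrow> 'a set) \<Rightarrow> ('a set \<Rightarrow> 'a set)" where
  "completion_mult G S f f' = (\<lambda>H. if H \<in> S then f H <#>\<^bsub>G\<^esub> f' (conj_by G f H) else undefined)"

definition completion_monoid :: "('a, 'b) monoid_scheme \<Rightarrow> 'a set set \<Rightarrow> ('a set \<Rightarrow> 'a set) monoid" where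
  "completion_monoid G S = \<lparr> carrier = completion G S,
                             monoid.mult = completion_mult G S,
                             one = (\<lambda>H. if H \<in> S then H else undefined) \<rparr>"

end

theory Submission imports Defs begin

context group begin

lemma conj_mem: "z \<in> conjugate G H x \<longleftrightarrow> (\<exists>h\<in>H. z = inv x \<otimes> h \<otimes> x)"
  by (auto simp: conjugate_def l_coset_def r_coset_def)

lemma rcos_mem: "z \<in> H #> x \<longleftrightarrow> (\<exists>h\<in>H. z = h \<otimes> x)"
  by (auto simp: r_coset_def)

lemma conj_mono: "K \<subseteq> H \<Longrightarrow> conjugate G K x \<subseteq> conjugate G H x"
  unfolding subset_iff conj_mem by blast

lemma conj_one: "H \<subseteq> carrier G \<Longrightarrow> conjugate G H \<one> = H"
proof (intro equalityI subsetI)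
  fix z assume a: "H \<subseteq> carrier G" "z \<in> H"
  then show "z \<in> conjugate G H \<one>" unfolding conj_mem by (intro bexI[of _ z]) auto
next
  fix z assume a: "H \<subseteq> carrier G" "z \<in> conjugate G H \<one>"
  then obtain h where "h \<in> H" "z = inv \<one> \<otimes> h \<otimes> \<one>" unfolding conj_mem by blast
  then show "z \<in> H" using a by (metis inv_one l_one r_one subsetD)
qed

lemma conj_conj: assumes "H \<subseteq> carrier G" "x \<in> carrier G" "y \<in> carrier G"
  shows "conjugate G (conjugate G H x) y = conjugate G H (x \<otimes> y)"
proof -
  have eq: "inv y \<otimes> (inv x \<otimes> h \<otimes> x) \<otimes> y = inv (x \<otimes> y) \<otimes> h \<otimes> (x \<otimes> y)" if "h \<in> H" for h
  proof -
    have hc: "h \<in> carrier G" using assms(1) that by blast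
    show ?thesis using assms hc by (simp add: inv_mult_group m_assoc)
  qed
  show ?thesis
  proof (rule equalityI)
    show "conjugate G (conjugate G H x) y \<subseteq> conjugate G H (x \<otimes> y)"
    proof (rule subsetI)
      fix z assume "z \<in> conjugate G (conjugate G H x) y"
      from conj_mem[THEN iffD1, OF this] obtain w where w: "w \<in> conjugate G H x" "z = inv y \<otimes> w \<otimes> y" by blast
      from conj_mem[THEN iffD1, OF w(1)] obtain h where h: "h \<in> H" "w = inv x \<otimes> h \<otimes> x" by blast
      have "z = inv (x \<otimes> y) \<otimes> h \<otimes> (x \<otimes> y)" unfolding w(2) h(2) by (rule eq[OF h(1)])
      then show "z \<in> conjugate G H (x \<otimes> y)" unfolding conj_mem by (rule bexI[OF _ h(1)])
    qed
    show "conjugate G H (x \<otimes> y) \<subseteq> conjugate G (conjugate G H x) y"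
    proof (rule subsetI)
      fix z assume "z \<in> conjugate G H (x \<otimes> y)"
      from conj_mem[THEN iffD1, OF this] obtain h where h: "h \<in> H" "z = inv (x \<otimes> y) \<otimes> h \<otimes> (x \<otimes> y)" by blast
      have m: "inv x \<otimes> h \<otimes> x \<in> conjugate G H x" unfolding conj_mem by (rule bexI[OF refl h(1)])
      have "z = inv y \<otimes> (inv x \<otimes> h \<otimes> x) \<otimes> y" unfolding h(2) by (rule eq[OF h(1), symmetric])
      then show "z \<in> conjugate G (conjugate G H x) y" unfolding conj_mem by (rule bexI[OF _ m])
    qed
  qed
qed

lemma conj_left: assumes "subgroup H G" "h \<in> H" "x \<in> carrier G"
  shows "conjugate G H (h \<otimes> x) = conjugate G H x"
proof -
  have hc: "h \<in> carrier G" by (rule subgroup.mem_carrier[OF assms(1,2)])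
  have Hc: "H \<subseteq> carrier G" by (rule subgroup.subset[OF assms(1)])
  have cH: "conjugate G H h = H"
  proof (rule equalityI; rule subsetI)
    fix z assume "z \<in> conjugate G H h"
    from conj_mem[THEN iffD1, OF this] obtain k where k: "k \<in> H" "z = inv h \<otimes> k \<otimes> h" by blast
    have "inv h \<otimes> k \<otimes> h \<in> H"
      by (rule subgroup.m_closed[OF assms(1) subgroup.m_closed[OF assms(1) subgroup.m_inv_closed[OF assms(1) assms(2)] k(1)] assms(2)])
    then show "z \<in> H" using k(2) by simp
  next
    fix k assume k: "k \<in> H"
    have kc: "k \<in> carrier G" using k Hc by blast
    have e: "k = inv h \<otimes> (h \<otimes> k \<otimes> inv h) \<otimes> h"
      using kc hc by (simp add: m_assoc, simp add: m_assoc[symmetric])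
    have "h \<otimes> k \<otimes> inv h \<in> H"
      by (rule subgroup.m_closed[OF assms(1) subgroup.m_closed[OF assms(1) assms(2) k] subgroup.m_inv_closed[OF assms(1) assms(2)]])
    then show "k \<in> conjugate G H h" unfolding conj_mem using e by (intro bexI[of _ "h \<otimes> k \<otimes> inv h"])
  qed
  have "conjugate G H (h \<otimes> x) = conjugate G (conjugate G H h) x"
    by (rule conj_conj[OF Hc hc assms(3), symmetric])
  then show ?thesis using cH by simp
qed

lemma conj_rep: assumes "subgroup H G" "x \<in> carrier G" "y \<in> carrier G" "H #> x = H #> y"
  shows "conjugate G H x = conjugate G H y"
proof -
  have "y \<in> H #> x" using assms repr_independenceD by blast
  then obtain h where "h \<in> H" "y = h \<otimes> x" by (auto simp: rcos_mem)
  then show ?thesis using conj_left assms by simp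
qed

lemma cancel1: "x \<in> carrier G \<Longrightarrow> z \<in> carrier G \<Longrightarrow> x \<otimes> (inv x \<otimes> z) = z"
  by (simp add: m_assoc[symmetric])

lemma cancel2: "x \<in> carrier G \<Longrightarrow> z \<in> carrier G \<Longrightarrow> inv x \<otimes> (x \<otimes> z) = z"
  by (simp add: m_assoc[symmetric])

lemma set_mult_mem: "z \<in> A <#> B \<longleftrightarrow> (\<exists>a\<in>A. \<exists>b\<in>B. z = a \<otimes> b)"
  by (auto simp: set_mult_def)

lemma prod_cos: assumes "subgroup H G" "x \<in> carrier G" "y \<in> carrier G"
  shows "(H #> x) <#> (conjugate G H x #> y) = H #> (x \<otimes> y)"
proof (rule equalityI; rule subsetI)
  have c: "\<And>h. h \<in> H \<Longrightarrow> h \<in> carrier G" by (rule subgroup.mem_carrier[OF assms(1)])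
  {
    fix z assume "z \<in> (H #> x) <#> (conjugate G H x #> y)"
    from set_mult_mem[THEN iffD1, OF this] obtain a b where
      ab: "a \<in> H #> x" "b \<in> conjugate G H x #> y" "z = a \<otimes> b" by blast
    from rcos_mem[THEN iffD1, OF ab(1)] obtain h1 where h1: "h1 \<in> H" "a = h1 \<otimes> x" by blast
    from rcos_mem[THEN iffD1, OF ab(2)] obtain w where w: "w \<in> conjugate G H x" "b = w \<otimes> y" by blast
    from conj_mem[THEN iffD1, OF w(1)] obtain h2 where h2: "h2 \<in> H" "w = inv x \<otimes> h2 \<otimes> x" by blast
    have "z = (h1 \<otimes> h2) \<otimes> (x \<otimes> y)"
      using ab(3) h1 w(2) h2 c[OF h1(1)] c[OF h2(1)] assms by (simp add: m_assoc cancel1)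
    moreover have "h1 \<otimes> h2 \<in> H" by (rule subgroup.m_closed[OF assms(1) h1(1) h2(1)])
    ultimately show "z \<in> H #> (x \<otimes> y)" by (intro rcos_mem[THEN iffD2] bexI)
  }
  {
    fix z assume "z \<in> H #> (x \<otimes> y)"
    from rcos_mem[THEN iffD1, OF this] obtain h where h: "h \<in> H" "z = h \<otimes> (x \<otimes> y)" by blast
    have a: "h \<otimes> x \<in> H #> x" unfolding rcos_mem using h(1) by blast
    have w: "inv x \<otimes> \<one> \<otimes> x \<in> conjugate G H x"
      unfolding conj_mem using subgroup.one_closed[OF assms(1)] by blast
    have b: "(inv x \<otimes> \<one> \<otimes> x) \<otimes> y \<in> conjugate G H x #> y"
      unfolding rcos_mem using w by blast
    have "z = (h \<otimes> x) \<otimes> ((inv x \<otimes> \<one> \<otimes> x) \<otimes> y)"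
      using h c[OF h(1)] assms by (simp add: m_assoc cancel1)
    then show "z \<in> (H #> x) <#> (conjugate G H x #> y)" using a b
      by (intro set_mult_mem[THEN iffD2] bexI)
  }
qed

lemma set_inv_mem: "z \<in> set_inv A \<longleftrightarrow> (\<exists>a\<in>A. z = inv a)"
  by (auto simp: SET_INV_def)

lemma setinv_cos: assumes "subgroup L G" "subgroup K G" "x \<in> carrier G" "conjugate G L x \<subseteq> K"
  shows "K <#> set_inv (L #> x) = K #> inv x"
proof (rule equalityI; rule subsetI)
  have cL: "\<And>h. h \<in> L \<Longrightarrow> h \<in> carrier G" by (rule subgroup.mem_carrier[OF assms(1)])
  have cK: "\<And>h. h \<in> K \<Longrightarrow> h \<in> carrier G" by (rule subgroup.mem_carrier[OF assms(2)])
  {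
    fix z assume "z \<in> K <#> set_inv (L #> x)"
    from set_mult_mem[THEN iffD1, OF this] obtain k b where
      kb: "k \<in> K" "b \<in> set_inv (L #> x)" "z = k \<otimes> b" by blast
    from set_inv_mem[THEN iffD1, OF kb(2)] obtain a where a: "a \<in> L #> x" "b = inv a" by blast
    from rcos_mem[THEN iffD1, OF a(1)] obtain l where l: "l \<in> L" "a = l \<otimes> x" by blast
    have "inv l \<in> L" by (rule subgroup.m_inv_closed[OF assms(1) l(1)])
    then have "inv x \<otimes> inv l \<otimes> x \<in> conjugate G L x" unfolding conj_mem by blast
    then have m: "inv x \<otimes> inv l \<otimes> x \<in> K" using assms(4) by blast
    have "k \<otimes> (inv x \<otimes> inv l \<otimes> x) \<in> K" by (rule subgroup.m_closed[OF assms(2) kb(1) m])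
    moreover have "z = k \<otimes> (inv x \<otimes> inv l \<otimes> x) \<otimes> inv x"
      using kb(3) a(2) l(2) cL[OF l(1)] cK[OF kb(1)] assms by (simp add: m_assoc inv_mult_group)
    ultimately show "z \<in> K #> inv x" by (intro rcos_mem[THEN iffD2] bexI)
  }
  {
    fix z assume "z \<in> K #> inv x"
    from rcos_mem[THEN iffD1, OF this] obtain k where k: "k \<in> K" "z = k \<otimes> inv x" by blast
    have a: "\<one> \<otimes> x \<in> L #> x" unfolding rcos_mem using subgroup.one_closed[OF assms(1)] by blast
    have b: "inv (\<one> \<otimes> x) \<in> set_inv (L #> x)" unfolding set_inv_mem using a by blast
    have "z = k \<otimes> inv (\<one> \<otimes> x)" using k assms by simp
    then show "z \<in> K <#> set_inv (L #> x)" using k(1) b by (intro set_mult_mem[THEN iffD2] bexI)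
  }
qed

end

locale cplt = group G for G (structure) +
  fixes S assumes adm: "admissible_family G S" and stab: "stable_family G S"
begin

lemma S_sub: "H \<in> S \<Longrightarrow> subgroup H G"
  using adm by (auto simp: admissible_family_def)

lemma S_carr: "H \<in> S \<Longrightarrow> H \<subseteq> carrier G"
  by (rule subgroup.subset[OF S_sub])

lemma S_conj: "H \<in> S \<Longrightarrow> x \<in> carrier G \<Longrightarrow> conjugate G H x \<in> S"
  using adm by (auto simp: admissible_family_def)

lemma S_meet: assumes "A \<in> S" "B \<in> S" shows "\<exists>L\<in>S. L \<subseteq> A \<and> L \<subseteq> B"
proof -
  have "finite {A, B} \<and> {A, B} \<noteq> {} \<and> {A, B} \<subseteq> S" using assms by auto
  then obtain L where "L \<in> S" "L \<subseteq> \<Inter>{A, B}" using adm unfolding admissible_family_def by meson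
  then show ?thesis by auto
qed

lemma comp_cos: "f \<in> completion G S \<Longrightarrow> H \<in> S \<Longrightarrow> \<exists>x\<in>carrier G. f H = H #> x"
  by (auto simp: completion_def RCOSETS_def)

lemma comp_mono: "f \<in> completion G S \<Longrightarrow> K \<in> S \<Longrightarrow> H \<in> S \<Longrightarrow> K \<subseteq> H \<Longrightarrow> f K \<subseteq> f H"
  by (auto simp: completion_def)

lemma comp_out: "f \<in> completion G S \<Longrightarrow> H \<notin> S \<Longrightarrow> f H = undefined"
  by (auto simp: completion_def)

lemma conj_by_eq: assumes "f \<in> completion G S" "H \<in> S" "x \<in> carrier G" "f H = H #> x"
  shows "conj_by G f H = conjugate G H x"
proof -
  let ?y = "SOME y. y \<in> carrier G \<and> f H = H #> y"
  have "?y \<in> carrier G \<and> f H = H #> ?y"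
    using comp_cos[OF assms(1,2)] by (metis (mono_tags, lifting) someI_ex)
  then show ?thesis unfolding conj_by_def using conj_rep[of H ?y x] assms S_sub by metis
qed

lemma mult_eq: assumes "f \<in> completion G S" "H \<in> S" "x \<in> carrier G" "f H = H #> x"
  "y \<in> carrier G" "f' (conjugate G H x) = conjugate G H x #> y"
  shows "completion_mult G S f f' H = H #> (x \<otimes> y)"
  using assms by (simp add: completion_mult_def conj_by_eq prod_cos S_sub)

lemma mult_eq_ex: assumes "f \<in> completion G S" "f' \<in> completion G S" "H \<in> S" "x \<in> carrier G" "f H = H #> x"
  shows "\<exists>y\<in>carrier G. f' (conjugate G H x) = conjugate G H x #> y \<and> completion_mult G S f f' H = H #> (x \<otimes> y)"
proof -
  obtain y where "y \<in> carrier G" "f' (conjugate G H x) = conjugate G H x #> y"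
    using comp_cos[OF assms(2) S_conj[OF assms(3,4)]] by blast
  then show ?thesis using mult_eq[OF assms(1,3,4,5)] by blast
qed

lemma cos_eq_mem: "subgroup H G \<Longrightarrow> x \<in> carrier G \<Longrightarrow> y \<in> H #> x \<Longrightarrow> H #> y = H #> x"
  using repr_independence by metis

lemma conj_by_mono: assumes "f \<in> completion G S" "K \<in> S" "H \<in> S" "K \<subseteq> H"
  shows "conj_by G f K \<subseteq> conj_by G f H"
proof -
  obtain x1 where x1: "x1 \<in> carrier G" "f K = K #> x1" using comp_cos assms by blast
  obtain x where x: "x \<in> carrier G" "f H = H #> x" using comp_cos assms by blast
  have "x1 \<in> H #> x" using rcos_self[OF x1(1) S_sub[OF assms(2)]] x1 x comp_mono[OF assms] by auto
  then have "H #> x1 = H #> x" using cos_eq_mem S_sub assms x by blast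
  then have "conj_by G f H = conjugate G H x1"
    using conj_by_eq[OF assms(1,3) x] conj_rep S_sub assms x x1 by metis
  moreover have "conj_by G f K = conjugate G K x1" using conj_by_eq[OF assms(1,2) x1] .
  ultimately show ?thesis using conj_mono assms by simp
qed

lemma mult_closed: assumes "f \<in> completion G S" "f' \<in> completion G S"
  shows "completion_mult G S f f' \<in> completion G S"
  unfolding completion_def
proof (intro CollectI conjI ballI allI impI)
  fix H assume H: "H \<in> S"
  obtain x where x: "x \<in> carrier G" "f H = H #> x" using comp_cos assms H by blast
  then obtain y where "y \<in> carrier G" "completion_mult G S f f' H = H #> (x \<otimes> y)"
    using mult_eq_ex[OF assms H x] by blast
  then show "completion_mult G S f f' H \<in> rcosets H"
    using rcosetsI S_carr H x by simp
next
  fix H K assume H: "H \<in> S" and K: "K \<in> S" and KH: "K \<subseteq> H"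
  obtain x where x: "x \<in> carrier G" "f H = H #> x" using comp_cos assms H by blast
  obtain x1 where x1: "x1 \<in> carrier G" "f K = K #> x1" using comp_cos assms K by blast
  have "conj_by G f K \<in> S" "conj_by G f H \<in> S"
    using conj_by_eq S_conj assms H K x x1 by auto
  then have "f' (conj_by G f K) \<subseteq> f' (conj_by G f H)"
    using comp_mono[OF assms(2)] conj_by_mono[OF assms(1) K H KH] by blast
  then show "completion_mult G S f f' K \<subseteq> completion_mult G S f f' H"
    using H K comp_mono[OF assms(1) K H KH] by (simp add: completion_mult_def mono_set_mult)
next
  fix H assume "H \<notin> S" then show "completion_mult G S f f' H = undefined"
    by (simp add: completion_mult_def)
qed

definition "one_c = (\<lambda>H. if H \<in> S then H else undefined)"

lemma one_closed_c: "one_c \<in> completion G S"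
  unfolding completion_def one_c_def
  using rcosetsI[of _ \<one>] S_carr by auto

lemma one_val: "H \<in> S \<Longrightarrow> one_c H = H #> \<one>"
  using S_carr by (simp add: one_c_def)

lemma assoc_c: assumes "f \<in> completion G S" "f' \<in> completion G S" "f'' \<in> completion G S"
  shows "completion_mult G S (completion_mult G S f f') f'' = completion_mult G S f (completion_mult G S f' f'')"
proof
  fix H show "completion_mult G S (completion_mult G S f f') f'' H = completion_mult G S f (completion_mult G S f' f'') H"
  proof (cases "H \<in> S")
    case H: True
    obtain x where x: "x \<in> carrier G" "f H = H #> x" using comp_cos assms H by blast
    define K where "K = conjugate G H x"
    have K: "K \<in> S" using K_def S_conj H x by simp
    obtain y where y: "y \<in> carrier G" "f' K = K #> y" "completion_mult G S f f' H = H #> (x \<otimes> y)"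
      using mult_eq_ex[OF assms(1,2) H x] K_def by blast
    obtain z where z: "z \<in> carrier G" "f'' (conjugate G K y) = conjugate G K y #> z"
       "completion_mult G S f' f'' K = K #> (y \<otimes> z)"
      using mult_eq_ex[OF assms(2,3) K y(1,2)] by blast
    have cc: "conjugate G H (x \<otimes> y) = conjugate G K y" using K_def conj_conj S_carr H x y by simp
    have "completion_mult G S (completion_mult G S f f') f'' H = H #> (x \<otimes> y \<otimes> z)"
      using mult_eq[OF mult_closed[OF assms(1,2)] H _ y(3) z(1)] x y cc z by simp
    moreover have "completion_mult G S f (completion_mult G S f' f'') H = H #> (x \<otimes> (y \<otimes> z))"
      using mult_eq[OF assms(1) H x, of "y \<otimes> z"] y z K_def by simp
    ultimately show ?thesis using x y z by (simp add: m_assoc)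
  next
    case False then show ?thesis by (simp add: completion_mult_def)
  qed
qed

lemma l_one_c: assumes "f \<in> completion G S" shows "completion_mult G S one_c f = f"
proof
  fix H show "completion_mult G S one_c f H = f H"
  proof (cases "H \<in> S")
    case H: True
    obtain y where y: "y \<in> carrier G" "f H = H #> y" using comp_cos assms H by blast
    have "completion_mult G S one_c f H = H #> (\<one> \<otimes> y)"
      using mult_eq[OF one_closed_c H one_closed one_val[OF H] y(1)] y conj_one S_carr H by simp
    then show ?thesis using y by simp
  next
    case False then show ?thesis using comp_out[OF assms False] by (simp add: completion_mult_def)
  qed
qed

lemma r_one_c: assumes "f \<in> completion G S" shows "completion_mult G S f one_c = f"
proof
  fix H show "completion_mult G S f one_c H = f H"
  proof (cases "H \<in> S")
    case H: True
    obtain x where x: "x \<in> carrier G" "f H = H #> x" using comp_cos assms H by blast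
    have "completion_mult G S f one_c H = H #> (x \<otimes> \<one>)"
      using mult_eq[OF assms H x one_closed] one_val S_conj H x by simp
    then show ?thesis using x by simp
  next
    case False then show ?thesis using comp_out[OF assms False] by (simp add: completion_mult_def)
  qed
qed


lemma normal_conj: assumes "L \<lhd> (G\<lparr>carrier := K\<rparr>)" "subgroup K G" "k \<in> K"
  shows "conjugate G L k \<subseteq> L"
proof
  have kc: "k \<in> carrier G" by (rule subgroup.mem_carrier[OF assms(2,3)])
  have LK: "L \<subseteq> K" using assms(1) unfolding normal_def subgroup_def by auto
  have Lc: "L \<subseteq> carrier G" using LK subgroup.subset[OF assms(2)] by (rule order_trans)
  have eq: "L #> k = k <# L"
    using normal.coset_eq[OF assms(1)] assms(3) by simp
  fix z assume "z \<in> conjugate G L k"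
  from conj_mem[THEN iffD1, OF this] obtain l where l: "l \<in> L" "z = inv k \<otimes> l \<otimes> k" by blast
  have "l \<otimes> k \<in> L #> k" unfolding rcos_mem using l(1) by blast
  then have "l \<otimes> k \<in> k <# L" using eq by simp
  then obtain l' where l': "l' \<in> L" "l \<otimes> k = k \<otimes> l'" by (auto simp: l_coset_def)
  have lc: "l \<in> carrier G" "l' \<in> carrier G" using l l' Lc by auto
  have "z = inv k \<otimes> (l \<otimes> k)" using l kc lc by (simp add: m_assoc)
  also have "\<dots> = l'" using l' kc lc by (simp add: m_assoc[symmetric])
  finally show "z \<in> L" using l' by simp
qed

lemma exists_small: assumes "f \<in> completion G S" "K \<in> S"
  shows "\<exists>L\<in>S. conj_by G f L \<subseteq> K"
proof -
  obtain x where x: "x \<in> carrier G" "f K = K #> x" using comp_cos assms by blast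
  define K' where "K' = conjugate G K (inv x)"
  have K': "K' \<in> S" using S_conj assms x K'_def by simp
  obtain N where N: "N \<in> S" "N \<subseteq> K" "N \<subseteq> K'" using S_meet[OF assms(2) K'] by blast
  obtain L where L: "L \<in> S" "L \<subseteq> N" "L \<lhd> (G\<lparr>carrier := K\<rparr>)"
    using stab N assms(2) unfolding stable_family_def by blast
  obtain xL where xL: "xL \<in> carrier G" "f L = L #> xL" using comp_cos assms L by blast
  have "xL \<in> K #> x" using rcos_self[OF xL(1) S_sub[OF L(1)]] xL x comp_mono[OF assms(1) L(1) assms(2)] L N by auto
  from rcos_mem[THEN iffD1, OF this] obtain k where k: "k \<in> K" "xL = k \<otimes> x" by blast
  have kc: "k \<in> carrier G" using k S_carr assms by blast
  have "conj_by G f L = conjugate G L (k \<otimes> x)" using conj_by_eq[OF assms(1) L(1) xL] k by simp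
  also have "\<dots> = conjugate G (conjugate G L k) x" using conj_conj S_carr L kc x by simp
  also have "\<dots> \<subseteq> conjugate G L x" using conj_mono normal_conj[OF L(3) S_sub[OF assms(2)] k(1)] by blast
  also have "\<dots> \<subseteq> conjugate G K' x" using conj_mono L N by blast
  also have "\<dots> = K" unfolding K'_def using conj_conj conj_one S_carr assms x by simp
  finally show ?thesis using L by blast
qed

definition "ginv f = (\<lambda>K. if K \<in> S then K <#> set_inv (f (SOME L. L \<in> S \<and> conj_by G f L \<subseteq> K)) else undefined)"

lemma small_eq: assumes "f \<in> completion G S" "K \<in> S" "L' \<in> S" "L \<in> S" "L' \<subseteq> L" "conj_by G f L \<subseteq> K"
  "x \<in> carrier G" "f L = L #> x" "x' \<in> carrier G" "f L' = L' #> x'"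
  shows "K #> inv x' = K #> inv x"
proof -
  have "x' \<in> L #> x" using rcos_self[OF assms(9) S_sub[OF assms(3)]] assms comp_mono[OF assms(1,3,4,5)] by auto
  from rcos_mem[THEN iffD1, OF this] obtain l where l: "l \<in> L" "x' = l \<otimes> x" by blast
  have lc: "l \<in> carrier G" using l S_carr assms by blast
  have "inv l \<in> L" using l subgroup.m_inv_closed[OF S_sub[OF assms(4)]] by blast
  then have "inv x \<otimes> inv l \<otimes> x \<in> conjugate G L x" unfolding conj_mem by blast
  then have "inv x \<otimes> inv l \<otimes> x \<in> K"
    using assms(6) conj_by_eq[OF assms(1,4,7,8)] by auto
  moreover have "inv x' = inv x \<otimes> inv l \<otimes> x \<otimes> inv x" using l lc assms by (simp add: m_assoc inv_mult_group)
  ultimately have "inv x' \<in> K #> inv x" by (intro rcos_mem[THEN iffD2] bexI)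
  then show ?thesis using cos_eq_mem S_sub assms by blast
qed

lemma ginv_val: assumes "f \<in> completion G S" "K \<in> S" "L \<in> S" "conj_by G f L \<subseteq> K" "x \<in> carrier G" "f L = L #> x"
  shows "ginv f K = K #> inv x"
proof -
  define L0 where "L0 = (SOME L. L \<in> S \<and> conj_by G f L \<subseteq> K)"
  have L0: "L0 \<in> S" "conj_by G f L0 \<subseteq> K" unfolding L0_def
    using someI_ex[OF exists_small[OF assms(1,2), unfolded Bex_def]] by auto
  obtain x0 where x0: "x0 \<in> carrier G" "f L0 = L0 #> x0" using comp_cos assms L0 by blast
  have "ginv f K = K <#> set_inv (L0 #> x0)" unfolding ginv_def L0_def[symmetric] using assms(2) x0(2) by simp
  also have "\<dots> = K #> inv x0"
    using setinv_cos[OF S_sub[OF L0(1)] S_sub[OF assms(2)] x0(1)] conj_by_eq[OF assms(1) L0(1) x0] L0(2) by simp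
  finally have g: "ginv f K = K #> inv x0" .
  obtain L3 where L3: "L3 \<in> S" "L3 \<subseteq> L" "L3 \<subseteq> L0" using S_meet[OF assms(3) L0(1)] by blast
  obtain x3 where x3: "x3 \<in> carrier G" "f L3 = L3 #> x3" using comp_cos assms L3 by blast
  have "K #> inv x3 = K #> inv x" using small_eq[OF assms(1,2) L3(1) assms(3) L3(2) assms(4,5,6) x3] .
  moreover have "K #> inv x3 = K #> inv x0" using small_eq[OF assms(1,2) L3(1) L0(1) L3(3) L0(2) x0 x3] .
  ultimately show ?thesis using g by simp
qed

lemma ginv_closed: assumes "f \<in> completion G S" shows "ginv f \<in> completion G S"
  unfolding completion_def
proof (intro CollectI conjI ballI allI impI)
  fix K assume K: "K \<in> S"
  obtain L where L: "L \<in> S" "conj_by G f L \<subseteq> K" using exists_small assms K by blast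
  obtain x where x: "x \<in> carrier G" "f L = L #> x" using comp_cos assms L by blast
  show "ginv f K \<in> rcosets K" using ginv_val[OF assms K L x] rcosetsI S_carr K x by simp
next
  fix H K assume H: "H \<in> S" and K: "K \<in> S" and KH: "K \<subseteq> H"
  obtain L where L: "L \<in> S" "conj_by G f L \<subseteq> K" using exists_small assms K by blast
  obtain x where x: "x \<in> carrier G" "f L = L #> x" using comp_cos assms L by blast
  have "ginv f K = K #> inv x" using ginv_val[OF assms K L x] .
  moreover have "ginv f H = H #> inv x" using ginv_val[OF assms H L(1) _ x] L KH by blast
  moreover have "K #> inv x \<subseteq> H #> inv x" using KH by (auto simp: r_coset_def)
  ultimately show "ginv f K \<subseteq> ginv f H" by simp
next
  fix H assume "H \<notin> S" then show "ginv f H = undefined" by (simp add: ginv_def)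
qed

lemma ginv_linv: assumes "f \<in> completion G S" shows "completion_mult G S (ginv f) f = one_c"
proof
  fix K show "completion_mult G S (ginv f) f K = one_c K"
  proof (cases "K \<in> S")
    case K: True
    obtain L where L: "L \<in> S" "conj_by G f L \<subseteq> K" using exists_small assms K by blast
    obtain x where x: "x \<in> carrier G" "f L = L #> x" using comp_cos assms L by blast
    define K' where "K' = conjugate G K (inv x)"
    have K': "K' \<in> S" using S_conj K x K'_def by simp
    have LK': "L \<subseteq> K'"
    proof
      fix l assume l: "l \<in> L"
      have lc: "l \<in> carrier G" using l S_carr L by blast
      have "inv x \<otimes> l \<otimes> x \<in> conjugate G L x" unfolding conj_mem using l by blast
      then have "inv x \<otimes> l \<otimes> x \<in> K" using L(2) conj_by_eq[OF assms L(1) x] by auto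
      moreover have "l = inv (inv x) \<otimes> (inv x \<otimes> l \<otimes> x) \<otimes> inv x" using lc x by (simp add: m_assoc cancel1)
      ultimately show "l \<in> K'" unfolding K'_def by (intro conj_mem[THEN iffD2] bexI)
    qed
    obtain x' where x': "x' \<in> carrier G" "f K' = K' #> x'" using comp_cos assms K' by blast
    have "x \<in> K' #> x'" using rcos_self[OF x(1) S_sub[OF L(1)]] x x' comp_mono[OF assms L(1) K' LK'] by auto
    then have fK': "f K' = K' #> x" using cos_eq_mem S_sub K' x' by metis
    have "completion_mult G S (ginv f) f K = K #> (inv x \<otimes> x)"
      using mult_eq[OF ginv_closed[OF assms] K inv_closed[OF x(1)] ginv_val[OF assms K L x] x(1)] fK' K'_def by simp
    then show ?thesis using x K S_carr by (simp add: one_c_def)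
  next
    case False then show ?thesis by (simp add: completion_mult_def one_c_def)
  qed
qed

lemma main: "group (completion_monoid G S)"
proof -
  have c: "carrier (completion_monoid G S) = completion G S" by (simp add: completion_monoid_def)
  have mm: "\<And>f g. f \<otimes>\<^bsub>completion_monoid G S\<^esub> g = completion_mult G S f g" by (simp add: completion_monoid_def)
  have o: "\<one>\<^bsub>completion_monoid G S\<^esub> = one_c" by (simp add: completion_monoid_def one_c_def)
  have m: "monoid (completion_monoid G S)"
  proof (rule monoidI, unfold c mm o)
    show "\<And>x y. x \<in> completion G S \<Longrightarrow> y \<in> completion G S \<Longrightarrow> completion_mult G S x y \<in> completion G S"
      by (rule mult_closed)
    show "one_c \<in> completion G S" by (rule one_closed_c)
    show "\<And>x y z. x \<in> completion G S \<Longrightarrow> y \<in> completion G S \<Longrightarrow> z \<in> completion G S \<Longrightarrow>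
      completion_mult G S (completion_mult G S x y) z = completion_mult G S x (completion_mult G S y z)"
      by (rule assoc_c)
    show "\<And>x. x \<in> completion G S \<Longrightarrow> completion_mult G S one_c x = x" by (rule l_one_c)
    show "\<And>x. x \<in> completion G S \<Longrightarrow> completion_mult G S x one_c = x" by (rule r_one_c)
  qed
  show ?thesis
  proof (rule monoid.group_l_invI[OF m], unfold c mm o)
    fix f assume "f \<in> completion G S"
    then show "\<exists>y\<in>completion G S. completion_mult G S y f = one_c"
      using ginv_closed ginv_linv by blast
  qed
qed

end

theorem lemma6p2:
  fixes G :: "('a, 'b) monoid_scheme" and S :: "'a set set"
  assumes "group G"
    and "admissible_family G S"
    and "stable_family G S"
  shows "group (completion_monoid G S)"
proof -
  interpret cplt G S using assms by (simp add: cplt_def cplt_axioms_def)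
  show ?thesis by (rule main)
qed

end
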